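(* For every $v\in\mathcal{K}\setminus\mathcal{Y}_{\mu_1}$ and every $w\in C_v^+\cap\mathcal{K}$ with $w\neq v$, we have $\nabla f_0(w)\cdot(w-v)>0$.
   Context: $\mathcal{K}\subset\mathbb{R}^q$ is an open, bounded, convex set with $0\in\mathcal{K}$. $f:\mathcal{K}\to\mathbb{R}$ is $C^2$ with $D^2f\ge -MI_q$ ($M\ge0$) and $f(v)\to\infty$ as $v\to\partial\mathcal{K}$, $v\in\mathcal{K}$; set $f_0(v)=f(v)+\frac M2|v|^2$, a convex $C^2$ function on $\mathcal{K}$ tending to $\infty$ at $\partial\mathcal{K}$. Let $g:\mathbb{S}^{q-1}\to(0,\infty)$ be the Lipschitz function such that $\nu\mapsto g(\nu)\nu$ parametrizes $\partial\mathcal{K}$, and $m_2=\sup g$. Define $G(x)=g(x/|x|)x$ for $x\ne0$, $G(0)=0$, on $\overline{B_1(0)}$, and $\mathcal{Y}_\mu=G(B_\mu(0))$ for $0<\mu<1$. Fix $r_0>0$ and $0<\mu_0<1$ with $\overline{B_{r_0}(0)}\subset\mathcal{Y}_{\mu_0}$. Let $s_0=\max\{f_0(v):v\in\partial B_{r_0}(0)\}$ and fix $\mu_1\in(\mu_0,1)$ such that $f_0(v)\ge 1+s_0$ for all $v\in\mathcal{K}\setminus\mathcal{Y}_{\mu_1}$. Cones: for $v\in\mathcal{K}\setminus\overline{B_{r_0}(0)}$, $C_v^-$ is the closed (solid) half-cone with vertex $v$, axis the ray from $v$ through $0$, and half-aperture $\alpha(v)\in(0,\pi/2)$ with $\sin\alpha(v)=r_0/|v|$;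 $C_v^+=\{v+\xi:\ v-\xi\in C_v^-\}$ is its reflection through $v$. *)

theory Defs
  imports "HOL-Analysis.Analysis"
begin

definition radialG :: "('a::euclidean_space \<Rightarrow> real) \<Rightarrow> 'a \<Rightarrow> 'a" where
  "radialG g x = (if x = 0 then 0 else g (x /\<^sub>R norm x) *\<^sub>R x)"

definition Yset :: "('a::euclidean_space \<Rightarrow> real) \<Rightarrow> real \<Rightarrow> 'a set" where
  "Yset g \<mu> = radialG g ` ball 0 \<mu>"

definition cone_angle :: "real \<Rightarrow> 'a::euclidean_space \<Rightarrow> real" where
  "cone_angle r0 v = arcsin (r0 / norm v)"

text \<open>Closed solid half-cone with vertex v, axis the ray from v through 0,
  half-aperture alpha(v): points v + xi with xi = 0 or angle(xi, -v) \<le> alpha(v).\<close>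
definition cone_minus :: "real \<Rightarrow> 'a::euclidean_space \<Rightarrow> 'a set" where
  "cone_minus r0 v = {v + \<xi> | \<xi>. \<xi> \<bullet> (- v) \<ge> norm \<xi> * norm v * cos (cone_angle r0 v)}"

definition cone_plus :: "real \<Rightarrow> 'a::euclidean_space \<Rightarrow> 'a set" where
  "cone_plus r0 v = {v + \<xi> | \<xi>. v - \<xi> \<in> cone_minus r0 v}"

end

theory Submission
  imports Defs
begin

lemma Yset_sub:
  fixes K :: "'a::euclidean_space set"
  assumes K_open: "open K" and K_convex: "convex K" and K_0: "0 \<in> K"
    and g_pos: "\<And>\<nu>. \<nu> \<in> sphere 0 1 \<Longrightarrow> g \<nu> > 0"
    and g_param: "frontier K = (\<lambda>\<nu>. g \<nu> *\<^sub>R \<nu>) ` sphere 0 1"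
    and mu: "\<mu> \<le> 1"
  shows "Yset g \<mu> \<subseteq> K"
proof
  fix y assume "y \<in> Yset g \<mu>"
  then obtain x where x: "x \<in> ball 0 \<mu>" "y = radialG g x" unfolding Yset_def by auto
  show "y \<in> K"
  proof (cases "x = 0")
    case True then show ?thesis using x K_0 by (simp add: radialG_def)
  next
    case False
    define \<nu> where "\<nu> = x /\<^sub>R norm x"
    have nu: "\<nu> \<in> sphere 0 1" using False by (simp add: \<nu>_def)
    define b where "b = g \<nu> *\<^sub>R \<nu>"
    have bf: "b \<in> frontier K" using g_param nu b_def by auto
    hence bc: "b \<in> closure K" by (simp add: frontier_def)
    have b0: "b \<noteq> 0" using g_pos[OF nu] nu by (auto simp: b_def)
    have nx: "0 < norm x" "norm x < 1" using False x mu by auto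
    have yb: "y = norm x *\<^sub>R b" using x False by (simp add: radialG_def b_def \<nu>_def)
    have ne: "norm x *\<^sub>R b \<noteq> b" using nx b0
      by (metis scaleR_cancel_right scaleR_one less_irrefl)
    have "y \<in> open_segment 0 b"
      using ne unfolding open_segment_def closed_segment_def using nx b0 yb
      by (auto intro!: exI[of _ "norm x"])
    moreover have "0 \<in> interior K" using K_open K_0 by (simp add: interior_open)
    ultimately have "y \<in> interior K"
      using in_interior_closure_convex_segment[OF K_convex _ bc] by blast
    thus ?thesis using interior_subset by blast
  qed
qed
theorem lemma2p4:
  fixes K :: "'a::euclidean_space set"
    and f :: "'a \<Rightarrow> real" and Df :: "'a \<Rightarrow> 'a" and D2f :: "'a \<Rightarrow> 'a \<Rightarrow> 'a"
    and M :: real and g :: "'a \<Rightarrow> real" and f0 :: "'a \<Rightarrow> real"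
    and r0 \<mu>0 \<mu>1 s0 :: real
  assumes K_open: "open K" and K_bounded: "bounded K" and K_convex: "convex K"
    and K_0: "0 \<in> K"
    \<comment> \<open>f is C^2 on K with gradient Df and Hessian D2f\<close>
    and f_grad: "\<And>x. x \<in> K \<Longrightarrow> (f has_derivative (\<lambda>h. Df x \<bullet> h)) (at x)"
    and f_hess: "\<And>x. x \<in> K \<Longrightarrow> (Df has_derivative D2f x) (at x)"
    and f_hess_cont: "\<And>h. continuous_on K (\<lambda>x. D2f x h)"
    \<comment> \<open>D^2 f \<ge> - M I\<close>
    and M_nonneg: "M \<ge> 0"
    and f_hess_bound: "\<And>x h. x \<in> K \<Longrightarrow> D2f x h \<bullet> h \<ge> - M * (norm h)\<^sup>2"
    \<comment> \<open>f(v) \<rightarrow> \<infinity> as v \<rightarrow> boundary of K within K\<close>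
    and f_blowup: "\<And>b. b \<in> frontier K \<Longrightarrow> filterlim f at_top (at b within K)"
    and f0_def: "\<And>v. f0 v = f v + M / 2 * (norm v)\<^sup>2"
    \<comment> \<open>g : S^{q-1} \<rightarrow> (0,\<infinity>) Lipschitz, \<nu> \<mapsto> g(\<nu>)\<nu> parametrizes the boundary\<close>
    and g_pos: "\<And>\<nu>. \<nu> \<in> sphere 0 1 \<Longrightarrow> g \<nu> > 0"
    and g_lip: "\<exists>L. lipschitz_on L (sphere 0 1) g"
    and g_param: "frontier K = (\<lambda>\<nu>. g \<nu> *\<^sub>R \<nu>) ` sphere 0 1"
    \<comment> \<open>choice of r0, \<mu>0, s0, \<mu>1\<close>
    and r0_pos: "r0 > 0" and \<mu>0_range: "0 < \<mu>0" "\<mu>0 < 1"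
    and ball_in_Y: "cball 0 r0 \<subseteq> Yset g \<mu>0"
    and s0_def: "s0 = (SUP v\<in>sphere 0 r0. f0 v)"
    and \<mu>1_range: "\<mu>0 < \<mu>1" "\<mu>1 < 1"
    and \<mu>1_prop: "\<And>v. v \<in> K - Yset g \<mu>1 \<Longrightarrow> f0 v \<ge> 1 + s0"
    and v_in: "v \<in> K - Yset g \<mu>1"
    and w_in: "w \<in> cone_plus r0 v \<inter> K" and w_ne: "w \<noteq> v"
  shows "(Df w + M *\<^sub>R w) \<bullet> (w - v) > 0"
proof -
  define \<xi> where "\<xi> = w - v"
  have w_eq: "w = v + \<xi>" by (simp add: \<xi>_def)
  have xi0: "\<xi> \<noteq> 0" using w_ne by (simp add: \<xi>_def)
  have vK: "v \<in> K" and wK: "w \<in> K" using v_in w_in by auto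
  have cone: "\<xi> \<bullet> v \<ge> norm \<xi> * norm v * cos (cone_angle r0 v)"
  proof -
    from w_in obtain \<zeta> where z: "w = v + \<zeta>" "v - \<zeta> \<in> cone_minus r0 v"
      unfolding cone_plus_def by auto
    have "\<zeta> = \<xi>" using z(1) by (simp add: \<xi>_def)
    from z(2) obtain \<eta> where e: "v - \<zeta> = v + \<eta>"
        "\<eta> \<bullet> (- v) \<ge> norm \<eta> * norm v * cos (cone_angle r0 v)"
      unfolding cone_minus_def by auto
    have "\<eta> = - \<xi>" using e(1) \<open>\<zeta> = \<xi>\<close> by (simp add: algebra_simps eq_neg_iff_add_eq_0)
    thus ?thesis using e(2) by simp
  qed
  have Ysub: "\<And>\<mu>. \<mu> \<le> 1 \<Longrightarrow> Yset g \<mu> \<subseteq> K"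
    using Yset_sub[OF K_open K_convex K_0 g_pos g_param] by blast
  have "Yset g \<mu>0 \<subseteq> Yset g \<mu>1" using \<mu>1_range unfolding Yset_def by auto
  hence cb: "cball 0 r0 \<subseteq> Yset g \<mu>1" using ball_in_Y by blast
  have vr: "norm v > r0" using cb v_in by (force simp: subset_iff)
  have sphK: "sphere 0 r0 \<subseteq> K" using ball_in_Y Ysub[of \<mu>0] \<mu>0_range by auto
  have vpos: "norm v > 0" using vr r0_pos by linarith
  define x where "x = r0 / norm v"
  have x01: "0 < x" "x < 1" using vr r0_pos vpos by (auto simp: x_def field_simps)
  have cosa: "cos (cone_angle r0 v) = sqrt (1 - x\<^sup>2)"
    unfolding cone_angle_def x_def[symmetric] using x01 by (intro cos_arcsin) auto
  have cpos: "sqrt (1 - x\<^sup>2) > 0" using x01 by (simp add: power_less_one_iff abs_less_iff)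
  have xin: "\<xi> \<bullet> v > 0"
  proof -
    have "norm \<xi> * norm v * sqrt (1 - x\<^sup>2) > 0" using xi0 vpos cpos by simp
    thus ?thesis using cone cosa by simp
  qed
  have sq: "(\<xi> \<bullet> v)\<^sup>2 \<ge> (norm \<xi>)\<^sup>2 * ((norm v)\<^sup>2 - r0\<^sup>2)"
  proof -
    have "(\<xi> \<bullet> v)\<^sup>2 \<ge> (norm \<xi> * norm v * sqrt (1 - x\<^sup>2))\<^sup>2"
      using cone cosa cpos xin by (intro power_mono) auto
    also have "(norm \<xi> * norm v * sqrt (1 - x\<^sup>2))\<^sup>2 = (norm \<xi>)\<^sup>2 * (norm v)\<^sup>2 * (1 - x\<^sup>2)"
      using x01 power_le_one[of x 2] by (simp add: power_mult_distrib)
    also have "\<dots> = (norm \<xi>)\<^sup>2 * ((norm v)\<^sup>2 - r0\<^sup>2)"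
      using vpos by (simp add: x_def field_simps power2_eq_square)
    finally show ?thesis .
  qed
  define ts where "ts = (\<xi> \<bullet> v) / (norm \<xi>)\<^sup>2"
  have nxi: "(norm \<xi>)\<^sup>2 > 0" using xi0 by simp
  have tspos: "ts > 0" using xin nxi by (simp add: ts_def)
  have "(norm (v - ts *\<^sub>R \<xi>))\<^sup>2 = (norm v)\<^sup>2 - 2 * ts * (\<xi> \<bullet> v) + ts\<^sup>2 * (norm \<xi>)\<^sup>2"
    unfolding power2_norm_eq_inner
    by (simp add: inner_diff_left inner_diff_right algebra_simps power2_eq_square inner_commute)
  also have "\<dots> = (norm v)\<^sup>2 - (\<xi> \<bullet> v)\<^sup>2 / (norm \<xi>)\<^sup>2"
    using nxi by (simp add: ts_def field_simps power2_eq_square)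
  also have "\<dots> \<le> r0\<^sup>2"
    using sq nxi by (simp add: field_simps)
  finally have "(norm (v - ts *\<^sub>R \<xi>))\<^sup>2 \<le> r0\<^sup>2" .
  hence tsle: "norm (v - ts *\<^sub>R \<xi>) \<le> r0" using r0_pos by (simp add: power2_le_iff_abs_le)
  have "\<exists>t. 0 \<le> t \<and> t \<le> ts \<and> norm (v - t *\<^sub>R \<xi>) = r0"
    using vr tsle tspos
    by (intro IVT2') (auto intro!: continuous_intros)
  then obtain t where t: "0 \<le> t" "norm (v - t *\<^sub>R \<xi>) = r0" by blast
  have tpos: "t > 0" using t vr by (cases "t = 0") auto
  define u where "u = v - t *\<^sub>R \<xi>"
  have uS: "u \<in> sphere 0 r0" using t by (simp add: u_def)
  hence uK: "u \<in> K" using sphK by auto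
  have f0eq: "f0 = (\<lambda>y. f y + M / 2 * (y \<bullet> y))"
    using f0_def by (simp add: fun_eq_iff power2_norm_eq_inner)
  have f0der: "\<And>y. y \<in> K \<Longrightarrow> (f0 has_derivative (\<lambda>h. (Df y + M *\<^sub>R y) \<bullet> h)) (at y)"
  proof -
    fix y assume yK: "y \<in> K"
    have "((\<lambda>y. f y + M / 2 * (y \<bullet> y)) has_derivative
        (\<lambda>h. Df y \<bullet> h + M / 2 * (y \<bullet> h + h \<bullet> y))) (at y)"
      by (rule has_derivative_add[OF f_grad[OF yK]], rule has_derivative_mult_right,
          rule has_derivative_inner[OF has_derivative_ident has_derivative_ident])
    thus "(f0 has_derivative (\<lambda>h. (Df y + M *\<^sub>R y) \<bullet> h)) (at y)"
      unfolding f0eq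
      by (rule has_derivative_eq_rhs) (auto simp: fun_eq_iff inner_add_left inner_commute algebra_simps)
  qed
  have "continuous_on K f0"
    by (rule continuous_at_imp_continuous_on) (blast intro: has_derivative_continuous f0der)
  hence "continuous_on (sphere 0 r0) f0" using sphK continuous_on_subset by blast
  hence "compact (f0 ` sphere 0 r0)" by (intro compact_continuous_image) auto
  hence "bdd_above (f0 ` sphere 0 r0)" by (meson bounded_imp_bdd_above compact_imp_bounded)
  hence fu: "f0 u \<le> s0" unfolding s0_def using uS by (intro cSUP_upper)
  have fv: "f0 v \<ge> 1 + s0" using \<mu>1_prop v_in by blast
  define p where "p s = v + s *\<^sub>R \<xi>" for s
  have pK: "p s \<in> K" if "-t \<le> s" "s \<le> 1" for s
  proof -
    define l where "l = (s + t) / (1 + t)"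
    have l01: "0 \<le> l" "l \<le> 1" using that tpos by (auto simp: l_def field_simps)
    have "(1 - l) *\<^sub>R u + l *\<^sub>R w = v + (l * (1 + t) - t) *\<^sub>R \<xi>"
      by (simp add: u_def w_eq algebra_simps)
    also have "l * (1 + t) - t = s" using tpos by (simp add: l_def field_simps)
    finally have "p s = (1 - l) *\<^sub>R u + l *\<^sub>R w" by (simp add: p_def)
    thus ?thesis using K_convex uK wK l01 by (simp add: convex_alt)
  qed
  define d1 where "d1 s = (Df (p s) + M *\<^sub>R p s) \<bullet> \<xi>" for s
  have pder: "(p has_derivative (\<lambda>h. h *\<^sub>R \<xi>)) (at s)" for s
  proof -
    have "((\<lambda>s. v + s *\<^sub>R \<xi>) has_derivative (\<lambda>h. 0 + h *\<^sub>R \<xi>)) (at s)"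
      by (intro has_derivative_add has_derivative_const has_derivative_scaleR_left has_derivative_ident)
    thus ?thesis unfolding p_def by simp
  qed
  have D1: "((\<lambda>s. f0 (p s)) has_real_derivative d1 s) (at s)" if "-t \<le> s" "s \<le> 1" for s
  proof -
    have "((\<lambda>s. f0 (p s)) has_derivative (\<lambda>h. (Df (p s) + M *\<^sub>R p s) \<bullet> (h *\<^sub>R \<xi>))) (at s)"
      by (rule has_derivative_compose[OF pder f0der[OF pK[OF that]]])
    thus ?thesis unfolding d1_def
      by (rule has_derivative_imp_has_field_derivative) (simp add: algebra_simps)
  qed
  define d2 where "d2 s = (D2f (p s) \<xi> + M *\<^sub>R \<xi>) \<bullet> \<xi>" for s
  have D2: "(d1 has_real_derivative d2 s) (at s)" if "-t \<le> s" "s \<le> 1" for s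
  proof -
    have lin: "linear (D2f (p s))"
      using f_hess[OF pK[OF that]] has_derivative_linear by blast
    have "((\<lambda>s. Df (p s)) has_derivative (\<lambda>h. D2f (p s) (h *\<^sub>R \<xi>))) (at s)"
      by (rule has_derivative_compose[OF pder f_hess[OF pK[OF that]]])
    hence "(d1 has_derivative (\<lambda>h. (D2f (p s) (h *\<^sub>R \<xi>) + M *\<^sub>R (h *\<^sub>R \<xi>)) \<bullet> \<xi>)) (at s)"
      unfolding d1_def
      by (rule has_derivative_inner_left[OF has_derivative_add[OF _ has_derivative_scaleR_right[OF pder]]])
    thus ?thesis unfolding d2_def
      by (rule has_derivative_imp_has_field_derivative)
         (simp add: linear_scale[OF lin] algebra_simps)
  qed
  have d2nn: "d2 s \<ge> 0" if "-t \<le> s" "s \<le> 1" for s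
    using f_hess_bound[OF pK[OF that], of \<xi>] M_nonneg
    by (simp add: d2_def inner_add_left power2_norm_eq_inner)
  have "\<exists>z. -t < z \<and> z < 0 \<and> f0 (p 0) - f0 (p (-t)) = (0 - -t) * d1 z"
    by (rule MVT2[OF _ D1]) (use tpos in auto)
  then obtain c where c: "-t < c" "c < 0" "f0 (p 0) - f0 (p (-t)) = t * d1 c" by auto
  have "p 0 = v" "p (-t) = u" by (simp_all add: p_def u_def)
  hence "t * d1 c > 0" using c fu fv by simp
  hence d1c: "d1 c > 0" using tpos by (simp add: zero_less_mult_iff)
  have "\<exists>z. c < z \<and> z < 1 \<and> d1 1 - d1 c = (1 - c) * d2 z"
    by (rule MVT2[OF _ D2]) (use c in auto)
  then obtain d where d: "c < d" "d < 1" "d1 1 - d1 c = (1 - c) * d2 d" by auto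
  have "(1 - c) * d2 d \<ge> 0" using d2nn[of d] c d by simp
  hence "d1 1 \<ge> d1 c" using d by simp
  moreover have "d1 1 = (Df w + M *\<^sub>R w) \<bullet> (w - v)"
  proof -
    have "p 1 = w" by (simp add: p_def w_eq)
    hence "d1 1 = (Df w + M *\<^sub>R w) \<bullet> \<xi>" by (simp add: d1_def)
    thus ?thesis unfolding \<xi>_def .
  qed
  ultimately show ?thesis using d1c by linarith
qed

end
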